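(* Let $V_0=\mathbb{C}[x_1,x_2,\dots]$ with each $x_i$ primitive, let $A$ be a commutative $\mathbb{C}$-algebra, and let $s_1,s_2$ be symmetric $A$-valued bicharacters on $V_0$. Suppose $r$ is an $A$-valued bicharacter on $V_0$ such that \[ \mathrm{EQ}_r(a\bullet_{s_1}b)=\mathrm{EQ}_r(a)\bullet_{s_2}\mathrm{EQ}_r(b)\quad\text{for all }a,b\in V_0. \] Then the map $\mathrm{EQ}_r$ depends only on the symmetrization $s=r\circ r^t=s_2\circ s_1^{-1}$; consequently the intertwining map $\mathrm{EQ}_r$ is unique among the maps $\mathrm{EQ}_{r}$ for the various bicharacters $r$ (any two bicharacters $r,\tilde r$ with this intertwining property satisfy $\mathrm{EQ}_r=\mathrm{EQ}_{\tilde r}$).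
   Context: Hopf structure on $V_0$: $\Delta(x_i)=x_i\otimes1+1\otimes x_i$, $\eta(x_i)=0$, $S(x_i)=-x_i$. Sweedler notation: $\Delta(a)=\sum a'\otimes a''$, $\Delta^2(a)=\sum a'\otimes a''\otimes a'''$. An $A$-valued bicharacter is a linear map $r:V_0\otimes V_0\to A$ with $r(1\otimes a)=\eta(a)=r(a\otimes1)$, $r(ab\otimes c)=\sum r(a\otimes c')r(b\otimes c'')$, $r(a\otimes bc)=\sum r(a'\otimes b)r(a''\otimes c)$. Convolution $(r\circ t)(a\otimes b)=\sum r(a'\otimes b')t(a''\otimes b'')$; $r^t(a\otimes b)=r(b\otimes a)$; inverse $t^{-1}(a\otimes b)=t(S(a)\otimes b)$; $t$ symmetric if $t=t^t$. For symmetric $t$, $\bullet_t$ is the $A$-bilinear product on $V_0\otimes A$ extending $a\bullet_t b=\sum a'b'\,t(a''\otimes b'')$. $\mathrm{EQ}_r(m)=\sum r(m'\otimes m'')m'''$, extended $A$-linearly. *)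

theory Defs
  imports Complex_Main "HOL-Library.Poly_Mapping"
begin

text \<open>V_0 = C[x_1,x_2,...] is represented via its monomial basis: a monomial
  x^alpha is a finitely supported exponent vector alpha :: nat =>0 nat.
  Elements of V_0 are finitely supported coefficient maps mono =>0 complex,
  elements of V_0 (x) A are mono =>0 'a.  An A-valued (C-linear) map on
  V_0 (x) V_0 is given by its values on the basis x^alpha (x) x^beta.\<close>

type_synonym mono = "nat \<Rightarrow>\<^sub>0 nat"

text \<open>A commutative C-algebra: a commutative ring 'a with a ring homomorphism
  iota from complex (the structure map).\<close>
definition C_alg :: "(complex \<Rightarrow> 'a::comm_ring_1) \<Rightarrow> bool" where
  "C_alg \<iota> \<longleftrightarrow> \<iota> 1 = 1 \<and> (\<forall>x y. \<iota> (x + y) = \<iota> x + \<iota> y) \<and> (\<forall>x y. \<iota> (x * y) = \<iota> x * \<iota> y)"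

definition subs :: "mono \<Rightarrow> mono set" where
  "subs \<alpha> = {\<beta>. \<forall>i. Poly_Mapping.lookup \<beta> i \<le> Poly_Mapping.lookup \<alpha> i}"

text \<open>Multi-binomial coefficient: Delta(x^alpha) = sum_{beta in subs alpha} mbinom alpha beta x^beta (x) x^(alpha-beta),
  since each x_i is primitive.\<close>
definition mbinom :: "mono \<Rightarrow> mono \<Rightarrow> nat" where
  "mbinom \<alpha> \<beta> = (\<Prod>i\<in>Poly_Mapping.keys \<alpha>. Poly_Mapping.lookup \<alpha> i choose Poly_Mapping.lookup \<beta> i)"

definition mdeg :: "mono \<Rightarrow> nat" where
  "mdeg \<alpha> = (\<Sum>i\<in>Poly_Mapping.keys \<alpha>. Poly_Mapping.lookup \<alpha> i)"

definition bichar :: "(mono \<Rightarrow> mono \<Rightarrow> 'a::comm_ring_1) \<Rightarrow> bool" where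
  "bichar r \<longleftrightarrow>
     (\<forall>\<beta>. r 0 \<beta> = (if \<beta> = 0 then 1 else 0)) \<and>
     (\<forall>\<alpha>. r \<alpha> 0 = (if \<alpha> = 0 then 1 else 0)) \<and>
     (\<forall>\<alpha> \<beta> \<gamma>. r (\<alpha> + \<beta>) \<gamma> =
        (\<Sum>\<delta>\<in>subs \<gamma>. of_nat (mbinom \<gamma> \<delta>) * r \<alpha> \<delta> * r \<beta> (\<gamma> - \<delta>))) \<and>
     (\<forall>\<alpha> \<beta> \<gamma>. r \<alpha> (\<beta> + \<gamma>) =
        (\<Sum>\<delta>\<in>subs \<alpha>. of_nat (mbinom \<alpha> \<delta>) * r \<delta> \<beta> * r (\<alpha> - \<delta>) \<gamma>))"

text \<open>Convolution (r o t)(a (x) b) = sum r(a' (x) b') t(a'' (x) b'').\<close>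
definition conv :: "(mono \<Rightarrow> mono \<Rightarrow> 'a::comm_ring_1) \<Rightarrow> (mono \<Rightarrow> mono \<Rightarrow> 'a) \<Rightarrow> mono \<Rightarrow> mono \<Rightarrow> 'a" where
  "conv r t \<alpha> \<beta> = (\<Sum>\<gamma>\<in>subs \<alpha>. \<Sum>\<delta>\<in>subs \<beta>.
      of_nat (mbinom \<alpha> \<gamma> * mbinom \<beta> \<delta>) * r \<gamma> \<delta> * t (\<alpha> - \<gamma>) (\<beta> - \<delta>))"

definition transp :: "(mono \<Rightarrow> mono \<Rightarrow> 'a) \<Rightarrow> mono \<Rightarrow> mono \<Rightarrow> 'a" where
  "transp r \<alpha> \<beta> = r \<beta> \<alpha>"

text \<open>t^{-1}(a (x) b) = t(S(a) (x) b), with S(x^alpha) = (-1)^|alpha| x^alpha.\<close>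
definition binv :: "(mono \<Rightarrow> mono \<Rightarrow> 'a::comm_ring_1) \<Rightarrow> mono \<Rightarrow> mono \<Rightarrow> 'a" where
  "binv t \<alpha> \<beta> = (-1) ^ mdeg \<alpha> * t \<alpha> \<beta>"

definition symm :: "(mono \<Rightarrow> mono \<Rightarrow> 'a) \<Rightarrow> bool" where
  "symm t \<longleftrightarrow> t = transp t"

text \<open>The A-bilinear product bullet_t on V_0 (x) A:
  x^alpha bullet_t x^beta = sum a' b' t(a'' (x) b'').\<close>
definition bprod :: "(mono \<Rightarrow> mono \<Rightarrow> 'a::comm_ring_1) \<Rightarrow> (mono \<Rightarrow>\<^sub>0 'a) \<Rightarrow> (mono \<Rightarrow>\<^sub>0 'a) \<Rightarrow> (mono \<Rightarrow>\<^sub>0 'a)" where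
  "bprod t p q = (\<Sum>\<alpha>\<in>Poly_Mapping.keys p. \<Sum>\<beta>\<in>Poly_Mapping.keys q. \<Sum>\<gamma>\<in>subs \<alpha>. \<Sum>\<delta>\<in>subs \<beta>.
      Poly_Mapping.single (\<gamma> + \<delta>)
        (Poly_Mapping.lookup p \<alpha> * Poly_Mapping.lookup q \<beta> * of_nat (mbinom \<alpha> \<gamma> * mbinom \<beta> \<delta>) * t (\<alpha> - \<gamma>) (\<beta> - \<delta>)))"

text \<open>EQ_r(m) = sum r(m' (x) m'') m''', extended A-linearly;
  Delta^2(x^alpha) = sum mbinom alpha beta * mbinom (alpha-beta) gamma x^beta (x) x^gamma (x) x^(alpha-beta-gamma).\<close>
definition EQ :: "(mono \<Rightarrow> mono \<Rightarrow> 'a::comm_ring_1) \<Rightarrow> (mono \<Rightarrow>\<^sub>0 'a) \<Rightarrow> (mono \<Rightarrow>\<^sub>0 'a)" where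
  "EQ r p = (\<Sum>\<alpha>\<in>Poly_Mapping.keys p. \<Sum>\<beta>\<in>subs \<alpha>. \<Sum>\<gamma>\<in>subs (\<alpha> - \<beta>).
      Poly_Mapping.single (\<alpha> - \<beta> - \<gamma>)
        (Poly_Mapping.lookup p \<alpha> * of_nat (mbinom \<alpha> \<beta> * mbinom (\<alpha> - \<beta>) \<gamma>) * r \<beta> \<gamma>))"

text \<open>Embedding V_0 into V_0 (x) A, a |-> a (x) 1.\<close>
definition emb :: "(complex \<Rightarrow> 'a::comm_ring_1) \<Rightarrow> (mono \<Rightarrow>\<^sub>0 complex) \<Rightarrow> (mono \<Rightarrow>\<^sub>0 'a)" where
  "emb \<iota> a = Poly_Mapping.map \<iota> a"

definition intertw :: "(complex \<Rightarrow> 'a::comm_ring_1) \<Rightarrow> (mono \<Rightarrow> mono \<Rightarrow> 'a) \<Rightarrow> (mono \<Rightarrow> mono \<Rightarrow> 'a) \<Rightarrow> (mono \<Rightarrow> mono \<Rightarrow> 'a) \<Rightarrow> bool" where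
  "intertw \<iota> r s1 s2 \<longleftrightarrow> (\<forall>a b. EQ r (bprod s1 (emb \<iota> a) (emb \<iota> b)) =
        bprod s2 (EQ r (emb \<iota> a)) (EQ r (emb \<iota> b)))"

end

theory Submission
  imports Defs
begin


abbreviation lk :: "('b \<Rightarrow>\<^sub>0 'c::zero) \<Rightarrow> 'b \<Rightarrow> 'c" where "lk \<equiv> Poly_Mapping.lookup"

definition ee :: "nat \<Rightarrow> mono" where "ee i = Poly_Mapping.single i 1"

lemma lk_ee [simp]: "lk (ee i) k = (if k = i then 1 else 0)"
  by (simp add: ee_def lookup_single when_def)

declare lookup_add [simp] lookup_minus [simp]

lemma mono_eqI: "(\<And>k. lk (a::mono) k = lk b k) \<Longrightarrow> a = b"
  by (rule poly_mapping_eqI)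

lemma ee_ne0 [simp]: "ee i \<noteq> 0" "0 \<noteq> ee i"
  by (metis lk_ee lookup_zero one_neq_zero)+

lemma ee_inj [simp]: "ee i = ee j \<longleftrightarrow> i = j"
  by (metis lk_ee one_neq_zero zero_neq_one)

lemma keys_ee [simp]: "Poly_Mapping.keys (ee i) = {i}"
  by (simp add: ee_def)

lemma in_keys_lk: "k \<in> Poly_Mapping.keys (p::mono) \<longleftrightarrow> 0 < lk p k"
  by (simp add: in_keys_iff)

lemma subs_iff: "\<beta> \<in> subs \<alpha> \<longleftrightarrow> (\<forall>i. lk \<beta> i \<le> lk \<alpha> i)"
  by (simp add: subs_def)

lemma keys_sub: "\<beta> \<in> subs \<alpha> \<Longrightarrow> Poly_Mapping.keys \<beta> \<subseteq> Poly_Mapping.keys \<alpha>"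
  by (auto simp: subs_iff in_keys_lk) (metis less_le_trans)

lemma keys_minus_sub: "Poly_Mapping.keys ((\<alpha>::mono) - \<beta>) \<subseteq> Poly_Mapping.keys \<alpha>"
  by (auto simp: in_keys_lk)

lemma keys_add_mono: "Poly_Mapping.keys ((\<alpha>::mono) + \<beta>) = Poly_Mapping.keys \<alpha> \<union> Poly_Mapping.keys \<beta>"
  by (auto simp: in_keys_lk)

lemma mdeg_S: "finite S \<Longrightarrow> Poly_Mapping.keys \<alpha> \<subseteq> S \<Longrightarrow> mdeg \<alpha> = (\<Sum>k\<in>S. lk \<alpha> k)"
  unfolding mdeg_def by (rule sum.mono_neutral_left) (auto simp: in_keys_iff)

lemma mdeg_add: "mdeg (\<alpha> + \<beta>) = mdeg \<alpha> + mdeg \<beta>"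
proof -
  let ?S = "Poly_Mapping.keys \<alpha> \<union> Poly_Mapping.keys \<beta>"
  have "mdeg (\<alpha> + \<beta>) = (\<Sum>k\<in>?S. lk (\<alpha>+\<beta>) k)" by (rule mdeg_S) (auto simp: keys_add_mono)
  also have "\<dots> = (\<Sum>k\<in>?S. lk \<alpha> k) + (\<Sum>k\<in>?S. lk \<beta> k)" by (simp add: sum.distrib)
  also have "\<dots> = mdeg \<alpha> + mdeg \<beta>" using mdeg_S[of ?S \<alpha>] mdeg_S[of ?S \<beta>] by simp
  finally show ?thesis .
qed

lemma mdeg_ee [simp]: "mdeg (ee i) = 1"
  by (simp add: mdeg_def)

lemma mdeg_0 [simp]: "mdeg 0 = 0"
  by (simp add: mdeg_def)

lemma minus_plus_ee: "0 < lk \<alpha> i \<Longrightarrow> (\<alpha> - ee i) + ee i = \<alpha>"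
  by (rule mono_eqI) auto

lemma plus_minus_ee [simp]: "(\<alpha> + ee i) - ee i = \<alpha>"
  by (rule mono_eqI) auto

lemma mono_induct [case_names zero step]:
  assumes "P 0" and "\<And>\<alpha> i. P \<alpha> \<Longrightarrow> P (\<alpha> + ee i)"
  shows "P \<alpha>"
proof (induction "mdeg \<alpha>" arbitrary: \<alpha>)
  case 0
  then have "\<alpha> = 0" unfolding mdeg_def
    by (metis (no_types, lifting) finite_keys in_keys_iff mono_eqI lookup_zero sum_eq_0_iff)
  then show ?case using assms by simp
next
  case (Suc n)
  then have "\<alpha> \<noteq> 0" by auto
  then obtain i where i: "i \<in> Poly_Mapping.keys \<alpha>"
    by (metis keys_eq_empty ex_in_conv)
  then have eq: "\<alpha> = (\<alpha> - ee i) + ee i" using minus_plus_ee in_keys_lk by metis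
  have "mdeg (\<alpha> - ee i) = n" using Suc(2) mdeg_add[of "\<alpha> - ee i" "ee i"] eq by simp
  then have "P (\<alpha> - ee i)" using Suc by blast
  then show ?case using assms(2) eq by metis
qed



lemma subs_0 [simp]: "subs 0 = {0}"
  by (auto simp: subs_iff intro: mono_eqI)

lemma subs_step: "subs (\<alpha> + ee i) = subs \<alpha> \<union> (\<lambda>\<beta>. \<beta> + ee i) ` subs \<alpha>"
proof (intro equalityI subsetI)
  fix \<beta> assume b: "\<beta> \<in> subs (\<alpha> + ee i)"
  show "\<beta> \<in> subs \<alpha> \<union> (\<lambda>\<beta>. \<beta> + ee i) ` subs \<alpha>"
  proof (cases "\<beta> \<in> subs \<alpha>")
    case False
    then obtain k where k: "lk \<beta> k > lk \<alpha> k" using subs_iff not_le by blast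
    have "lk \<beta> k \<le> lk \<alpha> k + (if k = i then 1 else 0)" using b by (simp add: subs_iff)
    with k have "k = i" by (cases "k = i") auto
    have "lk \<beta> i \<le> lk \<alpha> i + 1" using b unfolding subs_iff by (metis lk_ee lookup_add)
    with k \<open>k = i\<close> have "lk \<beta> i = lk \<alpha> i + 1" by simp
    have H: "lk \<beta> k' \<le> lk \<alpha> k' + (if k' = i then 1 else 0)" for k'
      using b by (simp add: subs_iff)
    have "lk \<beta> k' - (if k' = i then 1 else 0) \<le> lk \<alpha> k'" for k'
      using H[of k'] by (cases "k' = i") auto
    then have "\<beta> - ee i \<in> subs \<alpha>" by (simp add: subs_iff)
    moreover have "\<beta> = (\<beta> - ee i) + ee i"
      using \<open>lk \<beta> i = lk \<alpha> i + 1\<close> by (intro minus_plus_ee[symmetric]) simp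
    ultimately show ?thesis by blast
  qed simp
next
  fix \<beta> assume "\<beta> \<in> subs \<alpha> \<union> (\<lambda>\<beta>. \<beta> + ee i) ` subs \<alpha>"
  then show "\<beta> \<in> subs (\<alpha> + ee i)" by (auto simp: subs_iff le_SucI)
qed

lemma finite_subs [simp]: "finite (subs \<alpha>)"
  by (induction \<alpha> rule: mono_induct) (auto simp: subs_step)

lemma zero_in_subs [simp]: "0 \<in> subs \<alpha>" and self_in_subs [simp]: "\<alpha> \<in> subs \<alpha>"
  by (auto simp: subs_iff)

lemma subs_ee: "subs (ee i) = {0, ee i}"
  using subs_step[of 0 i] by (simp add: insert_commute)

lemma ee_in_subs: "ee j \<in> subs \<gamma> \<longleftrightarrow> j \<in> Poly_Mapping.keys \<gamma>"
  by (auto simp: subs_iff in_keys_lk)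

lemma mb_S: "finite S \<Longrightarrow> Poly_Mapping.keys \<alpha> \<subseteq> S \<Longrightarrow> \<beta> \<in> subs \<alpha> \<Longrightarrow>
  mbinom \<alpha> \<beta> = (\<Prod>k\<in>S. lk \<alpha> k choose lk \<beta> k)"
  unfolding mbinom_def
proof (rule prod.mono_neutral_left)
  assume "\<beta> \<in> subs \<alpha>"
  then show "\<forall>i\<in>S - Poly_Mapping.keys \<alpha>. (lk \<alpha> i choose lk \<beta> i) = 1"
  proof (intro ballI)
    fix i assume "i \<in> S - Poly_Mapping.keys \<alpha>"
    then have "lk \<alpha> i = 0" by (simp add: in_keys_iff)
    moreover have "lk \<beta> i \<le> lk \<alpha> i" using \<open>\<beta> \<in> subs \<alpha>\<close> by (simp add: subs_iff)
    ultimately show "(lk \<alpha> i choose lk \<beta> i) = 1" by simp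
  qed
qed

lemma mb_0 [simp]: "mbinom \<alpha> 0 = 1" and mb_self [simp]: "mbinom \<alpha> \<alpha> = 1"
  by (simp_all add: mbinom_def)

lemma mb_ee: "j \<in> Poly_Mapping.keys \<gamma> \<Longrightarrow> mbinom \<gamma> (ee j) = lk \<gamma> j"
  unfolding mbinom_def by (simp add: prod.remove[of _ j])

definition bn :: "mono \<Rightarrow> mono \<Rightarrow> nat" where
  "bn \<nu> \<beta> = (\<Prod>k\<in>Poly_Mapping.keys \<nu> \<union> Poly_Mapping.keys \<beta>. lk \<nu> k choose lk \<beta> k)"

lemma bn_S: "finite S \<Longrightarrow> Poly_Mapping.keys \<nu> \<union> Poly_Mapping.keys \<beta> \<subseteq> S \<Longrightarrow>
  bn \<nu> \<beta> = (\<Prod>k\<in>S. lk \<nu> k choose lk \<beta> k)"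
  unfolding bn_def by (rule prod.mono_neutral_left) (auto simp: in_keys_iff)

lemma mb_bn: "\<beta> \<in> subs \<nu> \<Longrightarrow> mbinom \<nu> \<beta> = bn \<nu> \<beta>"
  using mb_S[of "Poly_Mapping.keys \<nu>" \<nu> \<beta>] bn_S[of "Poly_Mapping.keys \<nu>" \<nu> \<beta>] keys_sub by auto

lemma bn_zero: "\<beta> \<notin> subs \<nu> \<Longrightarrow> bn \<nu> \<beta> = 0"
proof -
  assume "\<beta> \<notin> subs \<nu>"
  then obtain k where k: "lk \<beta> k > lk \<nu> k" using subs_iff not_le by blast
  then have "k \<in> Poly_Mapping.keys \<beta>" by (simp add: in_keys_lk)
  then show ?thesis unfolding bn_def using k
    by (intro prod_zero) auto
qed

lemma sum_bn: "finite T \<Longrightarrow> subs \<nu> \<subseteq> T \<Longrightarrow>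
  (\<Sum>\<beta>\<in>subs \<nu>. of_nat (mbinom \<nu> \<beta>) * f \<beta>) = (\<Sum>\<beta>\<in>T. of_nat (bn \<nu> \<beta>) * f \<beta>)"
  by (rule sum.mono_neutral_cong_left) (auto simp: bn_zero mb_bn)

lemma bn_pascal: "bn (\<nu> + ee i) \<beta> = bn \<nu> \<beta> + (if 0 < lk \<beta> i then bn \<nu> (\<beta> - ee i) else 0)"
proof -
  let ?S = "insert i (Poly_Mapping.keys \<nu> \<union> Poly_Mapping.keys \<beta>)"
  have f: "finite ?S" by simp
  have S1: "bn (\<nu> + ee i) \<beta> = (\<Prod>k\<in>?S. lk (\<nu> + ee i) k choose lk \<beta> k)"
    by (rule bn_S) (auto simp: keys_add_mono)
  have S2: "bn \<nu> \<beta> = (\<Prod>k\<in>?S. lk \<nu> k choose lk \<beta> k)" by (rule bn_S) auto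
  have S3: "bn \<nu> (\<beta> - ee i) = (\<Prod>k\<in>?S. lk \<nu> k choose lk (\<beta> - ee i) k)"
    by (rule bn_S) (use keys_minus_sub[of \<beta> "ee i"] in auto)
  let ?R = "(\<Prod>k\<in>?S - {i}. lk \<nu> k choose lk \<beta> k)"
  have R1: "(\<Prod>k\<in>?S - {i}. lk (\<nu> + ee i) k choose lk \<beta> k) = ?R"
    by (rule prod.cong) auto
  have R3: "(\<Prod>k\<in>?S - {i}. lk \<nu> k choose lk (\<beta> - ee i) k) = ?R"
    by (rule prod.cong) auto
  have X1: "bn (\<nu> + ee i) \<beta> = (lk (\<nu> + ee i) i choose lk \<beta> i) * (\<Prod>k\<in>?S - {i}. lk (\<nu> + ee i) k choose lk \<beta> k)"
    unfolding S1 by (rule prod.remove[OF f]) simp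
  have X2: "bn \<nu> \<beta> = (lk \<nu> i choose lk \<beta> i) * ?R"
    unfolding S2 by (rule prod.remove[OF f]) simp
  have X3: "bn \<nu> (\<beta> - ee i) = (lk \<nu> i choose lk (\<beta> - ee i) i) * (\<Prod>k\<in>?S - {i}. lk \<nu> k choose lk (\<beta> - ee i) k)"
    unfolding S3 by (rule prod.remove[OF f]) simp
  have "bn (\<nu> + ee i) \<beta> = (lk \<nu> i + 1 choose lk \<beta> i) * ?R"
    using X1[unfolded R1] by simp
  moreover note X2
  moreover have "bn \<nu> (\<beta> - ee i) = (lk \<nu> i choose (lk \<beta> i - 1)) * ?R"
    using X3[unfolded R3] by simp
  ultimately show ?thesis
    by (cases "lk \<beta> i") (auto simp: algebra_simps)
qed

lemma bn_absorb: "0 < lk \<beta> j \<Longrightarrow> bn \<nu> \<beta> * lk \<beta> j = lk \<nu> j * bn (\<nu> - ee j) (\<beta> - ee j)"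
proof -
  assume bj: "0 < lk \<beta> j"
  let ?S = "Poly_Mapping.keys \<nu> \<union> Poly_Mapping.keys \<beta>"
  have f: "finite ?S" and jS: "j \<in> ?S" using bj by (auto simp: in_keys_lk)
  have S1: "bn \<nu> \<beta> = (\<Prod>k\<in>?S. lk \<nu> k choose lk \<beta> k)" by (rule bn_S) auto
  have S2: "bn (\<nu> - ee j) (\<beta> - ee j) = (\<Prod>k\<in>?S. lk (\<nu> - ee j) k choose lk (\<beta> - ee j) k)"
    by (rule bn_S) (use keys_minus_sub[of \<beta> "ee j"] keys_minus_sub[of \<nu> "ee j"] in auto)
  let ?R = "(\<Prod>k\<in>?S - {j}. lk \<nu> k choose lk \<beta> k)"
  have R2: "(\<Prod>k\<in>?S - {j}. lk (\<nu> - ee j) k choose lk (\<beta> - ee j) k) = ?R"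
    by (rule prod.cong) auto
  have "bn \<nu> \<beta> = (lk \<nu> j choose lk \<beta> j) * ?R"
    unfolding S1 by (rule prod.remove[OF f jS])
  moreover have X: "bn (\<nu> - ee j) (\<beta> - ee j) = (lk (\<nu> - ee j) j choose lk (\<beta> - ee j) j) * (\<Prod>k\<in>?S - {j}. lk (\<nu> - ee j) k choose lk (\<beta> - ee j) k)"
    unfolding S2 by (rule prod.remove[OF f jS])
  then have "bn (\<nu> - ee j) (\<beta> - ee j) = ((lk \<nu> j - 1) choose (lk \<beta> j - 1)) * ?R"
    using X[unfolded R2] by simp
  moreover have "(lk \<nu> j choose lk \<beta> j) * lk \<beta> j = lk \<nu> j * ((lk \<nu> j - 1) choose (lk \<beta> j - 1))"
  proof (cases "lk \<nu> j")
    case 0 then show ?thesis using bj by simp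
  next
    case (Suc n)
    obtain m where m: "lk \<beta> j = Suc m" using bj by (metis gr0_implies_Suc)
    show ?thesis using Suc_times_binomial_eq[of n m] Suc m by (simp add: mult.commute)
  qed
  ultimately show ?thesis by (simp add: algebra_simps)
qed

lemma bn_absorb': "0 < lk \<nu> j \<Longrightarrow> bn \<nu> \<beta> * (lk \<nu> j - lk \<beta> j) = lk \<nu> j * bn (\<nu> - ee j) \<beta>"
proof -
  assume nj: "0 < lk \<nu> j"
  let ?S = "Poly_Mapping.keys \<nu> \<union> Poly_Mapping.keys \<beta>"
  have f: "finite ?S" and jS: "j \<in> ?S" using nj by (auto simp: in_keys_lk)
  have S1: "bn \<nu> \<beta> = (\<Prod>k\<in>?S. lk \<nu> k choose lk \<beta> k)" by (rule bn_S) auto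
  have S2: "bn (\<nu> - ee j) \<beta> = (\<Prod>k\<in>?S. lk (\<nu> - ee j) k choose lk \<beta> k)"
    by (rule bn_S) (use keys_minus_sub[of \<nu> "ee j"] in auto)
  let ?R = "(\<Prod>k\<in>?S - {j}. lk \<nu> k choose lk \<beta> k)"
  have R2: "(\<Prod>k\<in>?S - {j}. lk (\<nu> - ee j) k choose lk \<beta> k) = ?R"
    by (rule prod.cong) auto
  have Y1: "bn \<nu> \<beta> = (lk \<nu> j choose lk \<beta> j) * ?R"
    unfolding S1 by (rule prod.remove[OF f jS])
  have X: "bn (\<nu> - ee j) \<beta> = (lk (\<nu> - ee j) j choose lk \<beta> j) * (\<Prod>k\<in>?S - {j}. lk (\<nu> - ee j) k choose lk \<beta> k)"
    unfolding S2 by (rule prod.remove[OF f jS])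
  then have Y2: "bn (\<nu> - ee j) \<beta> = ((lk \<nu> j - 1) choose lk \<beta> j) * ?R"
    using X[unfolded R2] by simp
  have Y3: "(lk \<nu> j choose lk \<beta> j) * (lk \<nu> j - lk \<beta> j) = lk \<nu> j * ((lk \<nu> j - 1) choose lk \<beta> j)"
    using binomial_absorb_comp[of "lk \<nu> j" "lk \<beta> j"] by (simp add: mult.commute)
  have "bn \<nu> \<beta> * (lk \<nu> j - lk \<beta> j) = ((lk \<nu> j choose lk \<beta> j) * (lk \<nu> j - lk \<beta> j)) * ?R"
    unfolding Y1 by (simp only: ac_simps)
  also have "\<dots> = lk \<nu> j * (((lk \<nu> j - 1) choose lk \<beta> j) * ?R)" unfolding Y3 by (simp only: ac_simps)
  finally show ?thesis unfolding Y2 .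
qed



lemma pascal_sum:
  fixes f :: "mono \<Rightarrow> 'a::comm_semiring_1"
  shows "(\<Sum>\<beta>\<in>subs (\<nu> + ee i). of_nat (mbinom (\<nu> + ee i) \<beta>) * f \<beta>)
       = (\<Sum>\<beta>\<in>subs \<nu>. of_nat (mbinom \<nu> \<beta>) * (f \<beta> + f (\<beta> + ee i)))"
proof -
  let ?T = "subs (\<nu> + ee i)"
  let ?I = "(\<lambda>\<beta>. \<beta> + ee i) ` subs \<nu>"
  define g where "g \<beta> = of_nat (if 0 < lk \<beta> i then bn \<nu> (\<beta> - ee i) else 0) * f \<beta>" for \<beta>
  have sT: "subs \<nu> \<subseteq> ?T" "?I \<subseteq> ?T" by (auto simp: subs_step)
  have "(\<Sum>\<beta>\<in>?T. of_nat (mbinom (\<nu> + ee i) \<beta>) * f \<beta>) = (\<Sum>\<beta>\<in>?T. of_nat (bn (\<nu> + ee i) \<beta>) * f \<beta>)"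
    by (rule sum_bn) auto
  also have "\<dots> = (\<Sum>\<beta>\<in>?T. of_nat (bn \<nu> \<beta>) * f \<beta>) + (\<Sum>\<beta>\<in>?T. g \<beta>)"
    unfolding bn_pascal g_def by (simp add: sum.distrib distrib_right)
  also have "(\<Sum>\<beta>\<in>?T. of_nat (bn \<nu> \<beta>) * f \<beta>) = (\<Sum>\<beta>\<in>subs \<nu>. of_nat (mbinom \<nu> \<beta>) * f \<beta>)"
    by (rule sum_bn[symmetric]) (use sT in auto)
  also have "(\<Sum>\<beta>\<in>?T. g \<beta>) = (\<Sum>\<beta>\<in>?I. g \<beta>)"
  proof (rule sum.mono_neutral_right)
    show "\<forall>\<beta>\<in>?T - ?I. g \<beta> = 0"
    proof
      fix \<beta> assume b: "\<beta> \<in> ?T - ?I"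
      show "g \<beta> = 0"
      proof (cases "0 < lk \<beta> i")
        case True
        then have "\<beta> = (\<beta> - ee i) + ee i" by (simp add: minus_plus_ee)
        then have "\<beta> - ee i \<notin> subs \<nu>" using b by (metis (no_types, lifting) DiffD2 image_eqI)
        then show ?thesis by (simp add: g_def bn_zero True)
      qed (simp add: g_def)
    qed
  qed (use sT in auto)
  also have "\<dots> = (\<Sum>\<beta>\<in>subs \<nu>. g (\<beta> + ee i))"
    by (rule sum.reindex_cong[where l="\<lambda>\<beta>. \<beta> + ee i"]) (auto simp: inj_on_def)
  also have "\<dots> = (\<Sum>\<beta>\<in>subs \<nu>. of_nat (mbinom \<nu> \<beta>) * f (\<beta> + ee i))"
    by (rule sum.cong) (auto simp: g_def mb_bn)
  finally show ?thesis by (simp add: distrib_left sum.distrib)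
qed

lemma absorb_sum:
  fixes F :: "mono \<Rightarrow> 'a::comm_semiring_1"
  assumes nj: "0 < lk \<nu> j"
  shows "(\<Sum>\<beta>\<in>subs \<nu>. of_nat (mbinom \<nu> \<beta>) * (of_nat (lk \<beta> j) * F \<beta>))
       = of_nat (lk \<nu> j) * (\<Sum>\<beta>\<in>subs (\<nu> - ee j). of_nat (mbinom (\<nu> - ee j) \<beta>) * F (\<beta> + ee j))"
proof -
  let ?T = "subs \<nu>"
  let ?I = "(\<lambda>\<beta>. \<beta> + ee j) ` subs (\<nu> - ee j)"
  have nu: "(\<nu> - ee j) + ee j = \<nu>" using nj by (rule minus_plus_ee)
  define g where "g \<beta> = of_nat (if 0 < lk \<beta> j then lk \<nu> j * bn (\<nu> - ee j) (\<beta> - ee j) else 0) * F \<beta>" for \<beta>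
  have sT: "?I \<subseteq> ?T" using subs_step[of "\<nu> - ee j" j] nu by auto
  have "(\<Sum>\<beta>\<in>?T. of_nat (mbinom \<nu> \<beta>) * (of_nat (lk \<beta> j) * F \<beta>)) = (\<Sum>\<beta>\<in>?T. of_nat (bn \<nu> \<beta>) * (of_nat (lk \<beta> j) * F \<beta>))"
    by (rule sum_bn) auto
  also have "\<dots> = (\<Sum>\<beta>\<in>?T. g \<beta>)"
  proof (rule sum.cong)
    fix \<beta> show "of_nat (bn \<nu> \<beta>) * (of_nat (lk \<beta> j) * F \<beta>) = g \<beta>"
    proof (cases "0 < lk \<beta> j")
      case True
      have "of_nat (bn \<nu> \<beta>) * (of_nat (lk \<beta> j) * F \<beta>) = of_nat (bn \<nu> \<beta> * lk \<beta> j) * F \<beta>"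
        by (simp add: mult.assoc)
      then show ?thesis unfolding bn_absorb[OF True] g_def using True by simp
    qed (simp add: g_def)
  qed simp
  also have "(\<Sum>\<beta>\<in>?T. g \<beta>) = (\<Sum>\<beta>\<in>?I. g \<beta>)"
  proof (rule sum.mono_neutral_right)
    show "\<forall>\<beta>\<in>?T - ?I. g \<beta> = 0"
    proof
      fix \<beta> assume b: "\<beta> \<in> ?T - ?I"
      show "g \<beta> = 0"
      proof (cases "0 < lk \<beta> j")
        case True
        then have "\<beta> = (\<beta> - ee j) + ee j" by (simp add: minus_plus_ee)
        then have "\<beta> - ee j \<notin> subs (\<nu> - ee j)" using b by (metis (no_types, lifting) DiffD2 image_eqI)
        then show ?thesis by (simp add: g_def bn_zero True)
      qed (simp add: g_def)
    qed
  qed (use sT in auto)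
  also have "\<dots> = (\<Sum>\<beta>\<in>subs (\<nu> - ee j). g (\<beta> + ee j))"
    by (rule sum.reindex_cong[where l="\<lambda>\<beta>. \<beta> + ee j"]) (auto simp: inj_on_def)
  also have "\<dots> = (\<Sum>\<beta>\<in>subs (\<nu> - ee j). of_nat (lk \<nu> j) * (of_nat (mbinom (\<nu> - ee j) \<beta>) * F (\<beta> + ee j)))"
    by (rule sum.cong) (auto simp: g_def mb_bn mult.assoc)
  finally show ?thesis by (simp add: sum_distrib_left)
qed

lemma absorb_sum':
  fixes F :: "mono \<Rightarrow> 'a::comm_semiring_1"
  assumes nj: "0 < lk \<nu> j"
  shows "(\<Sum>\<beta>\<in>subs \<nu>. of_nat (mbinom \<nu> \<beta>) * (of_nat (lk \<nu> j - lk \<beta> j) * F \<beta>))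
       = of_nat (lk \<nu> j) * (\<Sum>\<beta>\<in>subs (\<nu> - ee j). of_nat (mbinom (\<nu> - ee j) \<beta>) * F \<beta>)"
proof -
  have sT: "subs (\<nu> - ee j) \<subseteq> subs \<nu>" by (auto simp: subs_iff) (meson diff_le_self order_trans)
  have "(\<Sum>\<beta>\<in>subs \<nu>. of_nat (mbinom \<nu> \<beta>) * (of_nat (lk \<nu> j - lk \<beta> j) * F \<beta>))
      = (\<Sum>\<beta>\<in>subs \<nu>. of_nat (bn \<nu> \<beta>) * (of_nat (lk \<nu> j - lk \<beta> j) * F \<beta>))"
    by (rule sum_bn) auto
  also have "\<dots> = (\<Sum>\<beta>\<in>subs \<nu>. of_nat (lk \<nu> j) * (of_nat (bn (\<nu> - ee j) \<beta>) * F \<beta>))"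
  proof (rule sum.cong)
    fix \<beta>
    have "of_nat (bn \<nu> \<beta>) * (of_nat (lk \<nu> j - lk \<beta> j) * F \<beta>) = (of_nat (bn \<nu> \<beta> * (lk \<nu> j - lk \<beta> j)) :: 'a) * F \<beta>"
      by (simp add: mult.assoc)
    then show "of_nat (bn \<nu> \<beta>) * (of_nat (lk \<nu> j - lk \<beta> j) * F \<beta>) = of_nat (lk \<nu> j) * (of_nat (bn (\<nu> - ee j) \<beta>) * F \<beta>)"
      unfolding bn_absorb'[OF nj] by (simp add: mult.assoc)
  qed simp
  also have "\<dots> = of_nat (lk \<nu> j) * (\<Sum>\<beta>\<in>subs \<nu>. of_nat (bn (\<nu> - ee j) \<beta>) * F \<beta>)"
    by (simp add: sum_distrib_left)
  also have "(\<Sum>\<beta>\<in>subs \<nu>. of_nat (bn (\<nu> - ee j) \<beta>) * F \<beta>) = (\<Sum>\<beta>\<in>subs (\<nu> - ee j). of_nat (mbinom (\<nu> - ee j) \<beta>) * F \<beta>)"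
    by (rule sum_bn[symmetric]) (use sT in auto)
  finally show ?thesis .
qed



lemma bc_0l: "bichar r \<Longrightarrow> r 0 \<beta> = (if \<beta> = 0 then 1 else 0)"
  and bc_0r: "bichar r \<Longrightarrow> r \<alpha> 0 = (if \<alpha> = 0 then 1 else 0)"
  and bc_m1: "bichar r \<Longrightarrow> r (\<alpha> + \<beta>) \<gamma> = (\<Sum>\<delta>\<in>subs \<gamma>. of_nat (mbinom \<gamma> \<delta>) * r \<alpha> \<delta> * r \<beta> (\<gamma> - \<delta>))"
  and bc_m2: "bichar r \<Longrightarrow> r \<alpha> (\<beta> + \<gamma>) = (\<Sum>\<delta>\<in>subs \<alpha>. of_nat (mbinom \<alpha> \<delta>) * r \<delta> \<beta> * r (\<alpha> - \<delta>) \<gamma>)"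
  unfolding bichar_def by blast+

lemma decomp_nonzero:
  assumes "(\<delta>::mono) \<noteq> 0" obtains j where "\<delta> = (\<delta> - ee j) + ee j" "j \<in> Poly_Mapping.keys \<delta>"
proof -
  obtain j where "j \<in> Poly_Mapping.keys \<delta>" using assms by (metis keys_eq_empty ex_in_conv)
  then show ?thesis using that minus_plus_ee in_keys_lk by metis
qed

lemma r_ee_left:
  assumes r: "bichar r" and nz: "r (ee i) \<delta> \<noteq> 0" shows "\<exists>j. \<delta> = ee j"
proof (cases "\<delta> = 0")
  case True then show ?thesis using nz bc_0r[OF r] by simp
next
  case False
  then obtain j where j: "\<delta> = (\<delta> - ee j) + ee j" by (rule decomp_nonzero)
  let ?d = "\<delta> - ee j"
  have "r (ee i) (?d + ee j) = (\<Sum>\<eta>\<in>{0, ee i}. of_nat (mbinom (ee i) \<eta>) * r \<eta> ?d * r (ee i - \<eta>) (ee j))"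
    using bc_m2[OF r] subs_ee by metis
  also have "\<dots> = r 0 ?d * r (ee i) (ee j)"
    by (simp add: bc_0l[OF r] bc_0r[OF r])
  finally have "r (ee i) \<delta> = r 0 ?d * r (ee i) (ee j)" using j by simp
  with nz have "?d = 0" by (auto simp: bc_0l[OF r] split: if_splits)
  then show ?thesis using j by auto
qed

lemma r_ee_right:
  assumes r: "bichar r" and nz: "r \<delta> (ee i) \<noteq> 0" shows "\<exists>j. \<delta> = ee j"
proof (cases "\<delta> = 0")
  case True then show ?thesis using nz bc_0l[OF r] by simp
next
  case False
  then obtain j where j: "\<delta> = (\<delta> - ee j) + ee j" by (rule decomp_nonzero)
  let ?d = "\<delta> - ee j"
  have "r (?d + ee j) (ee i) = (\<Sum>\<eta>\<in>{0, ee i}. of_nat (mbinom (ee i) \<eta>) * r ?d \<eta> * r (ee j) (ee i - \<eta>))"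
    using bc_m1[OF r] subs_ee by metis
  also have "\<dots> = r ?d 0 * r (ee j) (ee i)"
    by (simp add: bc_0l[OF r] bc_0r[OF r])
  finally have "r \<delta> (ee i) = r ?d 0 * r (ee j) (ee i)" using j by simp
  with nz have "?d = 0" by (auto simp: bc_0r[OF r] split: if_splits)
  then show ?thesis using j by auto
qed

lemma collapse:
  fixes h :: "mono \<Rightarrow> 'a::comm_semiring_1"
  assumes "\<And>\<delta>. h \<delta> \<noteq> 0 \<Longrightarrow> \<exists>j. \<delta> = ee j"
  shows "(\<Sum>\<delta>\<in>subs \<gamma>. of_nat (mbinom \<gamma> \<delta>) * h \<delta>) = (\<Sum>j\<in>Poly_Mapping.keys \<gamma>. of_nat (lk \<gamma> j) * h (ee j))"
proof -
  have "(\<Sum>\<delta>\<in>subs \<gamma>. of_nat (mbinom \<gamma> \<delta>) * h \<delta>) = (\<Sum>\<delta>\<in>ee ` Poly_Mapping.keys \<gamma>. of_nat (mbinom \<gamma> \<delta>) * h \<delta>)"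
  proof (rule sum.mono_neutral_right)
    show "\<forall>\<delta>\<in>subs \<gamma> - ee ` Poly_Mapping.keys \<gamma>. of_nat (mbinom \<gamma> \<delta>) * h \<delta> = 0"
    proof
      fix \<delta> assume d: "\<delta> \<in> subs \<gamma> - ee ` Poly_Mapping.keys \<gamma>"
      have "h \<delta> = 0"
      proof (rule ccontr)
        assume "h \<delta> \<noteq> 0"
        then obtain j where "\<delta> = ee j" using assms by blast
        with d show False using ee_in_subs by blast
      qed
      then show "of_nat (mbinom \<gamma> \<delta>) * h \<delta> = 0" by simp
    qed
  qed (auto simp: ee_in_subs)
  also have "\<dots> = (\<Sum>j\<in>Poly_Mapping.keys \<gamma>. of_nat (mbinom \<gamma> (ee j)) * h (ee j))"
    by (rule sum.reindex_cong[where l=ee]) (auto simp: inj_on_def)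
  also have "\<dots> = (\<Sum>j\<in>Poly_Mapping.keys \<gamma>. of_nat (lk \<gamma> j) * h (ee j))"
    by (rule sum.cong) (auto simp: mb_ee)
  finally show ?thesis .
qed

definition rec1 :: "(nat \<Rightarrow> nat \<Rightarrow> 'a::comm_ring_1) \<Rightarrow> (mono \<Rightarrow> mono \<Rightarrow> 'a) \<Rightarrow> bool" where
  "rec1 c f \<longleftrightarrow> (\<forall>\<gamma>. f 0 \<gamma> = (if \<gamma> = 0 then 1 else 0)) \<and>
     (\<forall>\<alpha> i \<gamma>. f (\<alpha> + ee i) \<gamma> = (\<Sum>j\<in>Poly_Mapping.keys \<gamma>. of_nat (lk \<gamma> j) * c i j * f \<alpha> (\<gamma> - ee j)))"

lemma rec1_r: assumes r: "bichar r" shows "rec1 (\<lambda>i j. r (ee i) (ee j)) r"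
  unfolding rec1_def
proof (intro conjI allI)
  fix \<gamma> show "r 0 \<gamma> = (if \<gamma> = 0 then 1 else 0)" by (rule bc_0l[OF r])
next
  fix \<alpha> i \<gamma>
  have "r (\<alpha> + ee i) \<gamma> = r (ee i + \<alpha>) \<gamma>" by (simp add: add.commute)
  also have "\<dots> = (\<Sum>\<delta>\<in>subs \<gamma>. of_nat (mbinom \<gamma> \<delta>) * (r (ee i) \<delta> * r \<alpha> (\<gamma> - \<delta>)))"
    by (simp add: bc_m1[OF r] mult.assoc)
  also have "\<dots> = (\<Sum>j\<in>Poly_Mapping.keys \<gamma>. of_nat (lk \<gamma> j) * (r (ee i) (ee j) * r \<alpha> (\<gamma> - ee j)))"
    by (rule collapse) (use r_ee_left[OF r] in \<open>metis mult_zero_left\<close>)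
  finally show "r (\<alpha> + ee i) \<gamma> = (\<Sum>j\<in>Poly_Mapping.keys \<gamma>. of_nat (lk \<gamma> j) * r (ee i) (ee j) * r \<alpha> (\<gamma> - ee j))"
    by (simp add: mult.assoc)
qed

lemma rec2_r: assumes r: "bichar r"
  shows "r \<alpha> (\<gamma> + ee i) = (\<Sum>j\<in>Poly_Mapping.keys \<alpha>. of_nat (lk \<alpha> j) * r (ee j) (ee i) * r (\<alpha> - ee j) \<gamma>)"
proof -
  have "r \<alpha> (\<gamma> + ee i) = r \<alpha> (ee i + \<gamma>)" by (simp add: add.commute)
  also have "\<dots> = (\<Sum>\<delta>\<in>subs \<alpha>. of_nat (mbinom \<alpha> \<delta>) * (r \<delta> (ee i) * r (\<alpha> - \<delta>) \<gamma>))"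
    by (simp add: bc_m2[OF r] mult.assoc)
  also have "\<dots> = (\<Sum>j\<in>Poly_Mapping.keys \<alpha>. of_nat (lk \<alpha> j) * (r (ee j) (ee i) * r (\<alpha> - ee j) \<gamma>))"
    by (rule collapse) (use r_ee_right[OF r] in \<open>metis mult_zero_left\<close>)
  finally show ?thesis by (simp add: mult.assoc)
qed

lemma rec1_transp: assumes r: "bichar r" shows "rec1 (\<lambda>i j. r (ee j) (ee i)) (transp r)"
  unfolding rec1_def transp_def
  using bc_0r[OF r] rec2_r[OF r] by simp

lemma rec1_binv: assumes "rec1 c r" shows "rec1 (\<lambda>i j. - c i j) (binv r)"
  using assms unfolding rec1_def binv_def
  by (simp add: mdeg_add sum_distrib_left mult_ac)

lemma rec1_unique: assumes "rec1 c f" "rec1 c g" shows "f = g"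
proof -
  have "\<forall>\<gamma>. f \<alpha> \<gamma> = g \<alpha> \<gamma>" for \<alpha>
    by (induction \<alpha> rule: mono_induct) (use assms in \<open>simp_all add: rec1_def\<close>)
  then show ?thesis by blast
qed

lemma rec1_ee: assumes "rec1 c f" shows "f (ee i) (ee j) = c i j"
proof -
  have "f (0 + ee i) (ee j) = (\<Sum>k\<in>Poly_Mapping.keys (ee j). of_nat (lk (ee j) k) * c i k * f 0 (ee j - ee k))"
    using assms unfolding rec1_def by blast
  also have "\<dots> = c i j * f 0 0" by simp
  also have "\<dots> = c i j" using assms unfolding rec1_def by simp
  finally show ?thesis by simp
qed



lemma keys_ext:
  fixes h :: "nat \<Rightarrow> 'a::comm_semiring_1"
  shows "finite S \<Longrightarrow> Poly_Mapping.keys p \<subseteq> S \<Longrightarrow>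
    (\<Sum>j\<in>Poly_Mapping.keys p. of_nat (lk p j) * h j) = (\<Sum>j\<in>S. of_nat (lk p j) * h j)"
  by (rule sum.mono_neutral_left) (auto simp: in_keys_iff)

lemma diff_ee_comm: "(\<gamma>::mono) - \<delta> - ee j = (\<gamma> - ee j) - \<delta>"
  by (rule mono_eqI) auto

lemma diff_plus_ee: "(\<gamma>::mono) - (\<delta> + ee j) = (\<gamma> - ee j) - \<delta>"
  by (rule mono_eqI) auto

definition K :: "(mono \<Rightarrow> mono \<Rightarrow> 'a::comm_ring_1) \<Rightarrow> (mono \<Rightarrow> mono \<Rightarrow> 'a) \<Rightarrow> mono \<Rightarrow> mono \<Rightarrow> mono \<Rightarrow> 'a" where
  "K r t \<alpha> \<eta> \<gamma> = (\<Sum>\<delta>\<in>subs \<gamma>. of_nat (mbinom \<gamma> \<delta>) * (r \<eta> \<delta> * t (\<alpha> - \<eta>) (\<gamma> - \<delta>)))"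

lemma conv_alt: "conv r t \<alpha> \<gamma> = (\<Sum>\<eta>\<in>subs \<alpha>. of_nat (mbinom \<alpha> \<eta>) * K r t \<alpha> \<eta> \<gamma>)"
  unfolding conv_def K_def by (simp add: sum_distrib_left mult_ac)

lemma rec1_conv:
  assumes ra: "rec1 a r" and tb: "rec1 b t"
  shows "rec1 (\<lambda>i j. a i j + b i j) (conv r t)"
  unfolding rec1_def
proof (intro conjI allI)
  have r0: "r 0 \<delta> = (if \<delta> = 0 then 1 else 0)" for \<delta> using ra by (simp add: rec1_def)
  have t0: "t 0 \<delta> = (if \<delta> = 0 then 1 else 0)" for \<delta> using tb by (simp add: rec1_def)
  fix \<gamma>
  have "conv r t 0 \<gamma> = (\<Sum>\<delta>\<in>subs \<gamma>. of_nat (mbinom \<gamma> \<delta>) * r 0 \<delta> * t 0 (\<gamma> - \<delta>))"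
    by (simp add: conv_def)
  also have "\<dots> = (\<Sum>\<delta>\<in>subs \<gamma>. if \<delta> = 0 then t 0 \<gamma> else 0)"
    by (rule sum.cong) (auto simp: r0)
  also have "\<dots> = t 0 \<gamma>" by simp
  finally show "conv r t 0 \<gamma> = (if \<gamma> = 0 then 1 else 0)" by (simp add: t0)
next
  fix \<alpha> i \<gamma>
  have rs: "r (\<eta> + ee i) \<delta> = (\<Sum>j\<in>Poly_Mapping.keys \<delta>. of_nat (lk \<delta> j) * a i j * r \<eta> (\<delta> - ee j))" for \<eta> \<delta>
    using ra by (simp add: rec1_def)
  have ts: "t (\<eta> + ee i) \<delta> = (\<Sum>j\<in>Poly_Mapping.keys \<delta>. of_nat (lk \<delta> j) * b i j * t \<eta> (\<delta> - ee j))" for \<eta> \<delta>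
    using tb by (simp add: rec1_def)
  define f where "f \<eta> = K r t (\<alpha> + ee i) \<eta> \<gamma>" for \<eta>
  have claim: "f \<eta> + f (\<eta> + ee i) = (\<Sum>j\<in>Poly_Mapping.keys \<gamma>. of_nat (lk \<gamma> j) * (a i j + b i j) * K r t \<alpha> \<eta> (\<gamma> - ee j))"
    if eta: "\<eta> \<in> subs \<alpha>" for \<eta>
  proof -
    have e1: "\<alpha> + ee i - \<eta> = (\<alpha> - \<eta>) + ee i"
      using eta by (intro mono_eqI) (auto simp: subs_iff)
    have e2: "\<alpha> + ee i - (\<eta> + ee i) = \<alpha> - \<eta>"
      by (rule mono_eqI) auto
    have "f \<eta> = (\<Sum>\<delta>\<in>subs \<gamma>. of_nat (mbinom \<gamma> \<delta>) * (r \<eta> \<delta> * t ((\<alpha> - \<eta>) + ee i) (\<gamma> - \<delta>)))"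
      by (simp add: f_def K_def e1)
    also have "\<dots> = (\<Sum>\<delta>\<in>subs \<gamma>. \<Sum>j\<in>Poly_Mapping.keys \<gamma>. b i j * (of_nat (mbinom \<gamma> \<delta>) * (of_nat (lk \<gamma> j - lk \<delta> j) * (r \<eta> \<delta> * t (\<alpha> - \<eta>) ((\<gamma> - ee j) - \<delta>)))))"
    proof (rule sum.cong)
      fix \<delta> assume d: "\<delta> \<in> subs \<gamma>"
      have "t ((\<alpha> - \<eta>) + ee i) (\<gamma> - \<delta>) = (\<Sum>j\<in>Poly_Mapping.keys (\<gamma> - \<delta>). of_nat (lk (\<gamma> - \<delta>) j) * (b i j * t (\<alpha> - \<eta>) (\<gamma> - \<delta> - ee j)))"
        by (simp add: ts mult.assoc)
      also have "\<dots> = (\<Sum>j\<in>Poly_Mapping.keys \<gamma>. of_nat (lk (\<gamma> - \<delta>) j) * (b i j * t (\<alpha> - \<eta>) (\<gamma> - \<delta> - ee j)))"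
        by (rule keys_ext) (auto simp: keys_minus_sub)
      finally show "of_nat (mbinom \<gamma> \<delta>) * (r \<eta> \<delta> * t ((\<alpha> - \<eta>) + ee i) (\<gamma> - \<delta>)) =
         (\<Sum>j\<in>Poly_Mapping.keys \<gamma>. b i j * (of_nat (mbinom \<gamma> \<delta>) * (of_nat (lk \<gamma> j - lk \<delta> j) * (r \<eta> \<delta> * t (\<alpha> - \<eta>) ((\<gamma> - ee j) - \<delta>)))))"
        by (simp add: sum_distrib_left diff_ee_comm mult_ac)
    qed simp
    also have "\<dots> = (\<Sum>j\<in>Poly_Mapping.keys \<gamma>. \<Sum>\<delta>\<in>subs \<gamma>. b i j * (of_nat (mbinom \<gamma> \<delta>) * (of_nat (lk \<gamma> j - lk \<delta> j) * (r \<eta> \<delta> * t (\<alpha> - \<eta>) ((\<gamma> - ee j) - \<delta>)))))"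
      by (rule sum.swap)
    also have "\<dots> = (\<Sum>j\<in>Poly_Mapping.keys \<gamma>. b i j * (of_nat (lk \<gamma> j) * K r t \<alpha> \<eta> (\<gamma> - ee j)))"
    proof (rule sum.cong)
      fix j assume j: "j \<in> Poly_Mapping.keys \<gamma>"
      have "(\<Sum>\<delta>\<in>subs \<gamma>. of_nat (mbinom \<gamma> \<delta>) * (of_nat (lk \<gamma> j - lk \<delta> j) * (r \<eta> \<delta> * t (\<alpha> - \<eta>) ((\<gamma> - ee j) - \<delta>))))
          = of_nat (lk \<gamma> j) * K r t \<alpha> \<eta> (\<gamma> - ee j)"
        unfolding K_def by (rule absorb_sum') (use j in \<open>simp add: in_keys_lk\<close>)
      then show "(\<Sum>\<delta>\<in>subs \<gamma>. b i j * (of_nat (mbinom \<gamma> \<delta>) * (of_nat (lk \<gamma> j - lk \<delta> j) * (r \<eta> \<delta> * t (\<alpha> - \<eta>) ((\<gamma> - ee j) - \<delta>)))))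
          = b i j * (of_nat (lk \<gamma> j) * K r t \<alpha> \<eta> (\<gamma> - ee j))"
        by (simp add: sum_distrib_left[symmetric])
    qed simp
    finally have F1: "f \<eta> = (\<Sum>j\<in>Poly_Mapping.keys \<gamma>. b i j * (of_nat (lk \<gamma> j) * K r t \<alpha> \<eta> (\<gamma> - ee j)))" .

    have "f (\<eta> + ee i) = (\<Sum>\<delta>\<in>subs \<gamma>. of_nat (mbinom \<gamma> \<delta>) * (r (\<eta> + ee i) \<delta> * t (\<alpha> - \<eta>) (\<gamma> - \<delta>)))"
      by (simp add: f_def K_def e2)
    also have "\<dots> = (\<Sum>\<delta>\<in>subs \<gamma>. \<Sum>j\<in>Poly_Mapping.keys \<gamma>. a i j * (of_nat (mbinom \<gamma> \<delta>) * (of_nat (lk \<delta> j) * (r \<eta> (\<delta> - ee j) * t (\<alpha> - \<eta>) (\<gamma> - \<delta>)))))"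
    proof (rule sum.cong)
      fix \<delta> assume d: "\<delta> \<in> subs \<gamma>"
      have "r (\<eta> + ee i) \<delta> = (\<Sum>j\<in>Poly_Mapping.keys \<delta>. of_nat (lk \<delta> j) * (a i j * r \<eta> (\<delta> - ee j)))"
        by (simp add: rs mult.assoc)
      also have "\<dots> = (\<Sum>j\<in>Poly_Mapping.keys \<gamma>. of_nat (lk \<delta> j) * (a i j * r \<eta> (\<delta> - ee j)))"
        by (rule keys_ext) (use d keys_sub in auto)
      finally show "of_nat (mbinom \<gamma> \<delta>) * (r (\<eta> + ee i) \<delta> * t (\<alpha> - \<eta>) (\<gamma> - \<delta>)) =
         (\<Sum>j\<in>Poly_Mapping.keys \<gamma>. a i j * (of_nat (mbinom \<gamma> \<delta>) * (of_nat (lk \<delta> j) * (r \<eta> (\<delta> - ee j) * t (\<alpha> - \<eta>) (\<gamma> - \<delta>)))))"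
        by (simp add: sum_distrib_left sum_distrib_right mult_ac)
    qed simp
    also have "\<dots> = (\<Sum>j\<in>Poly_Mapping.keys \<gamma>. \<Sum>\<delta>\<in>subs \<gamma>. a i j * (of_nat (mbinom \<gamma> \<delta>) * (of_nat (lk \<delta> j) * (r \<eta> (\<delta> - ee j) * t (\<alpha> - \<eta>) (\<gamma> - \<delta>)))))"
      by (rule sum.swap)
    also have "\<dots> = (\<Sum>j\<in>Poly_Mapping.keys \<gamma>. a i j * (of_nat (lk \<gamma> j) * K r t \<alpha> \<eta> (\<gamma> - ee j)))"
    proof (rule sum.cong)
      fix j assume j: "j \<in> Poly_Mapping.keys \<gamma>"
      have "(\<Sum>\<delta>\<in>subs \<gamma>. of_nat (mbinom \<gamma> \<delta>) * (of_nat (lk \<delta> j) * (r \<eta> (\<delta> - ee j) * t (\<alpha> - \<eta>) (\<gamma> - \<delta>))))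
          = of_nat (lk \<gamma> j) * (\<Sum>\<delta>\<in>subs (\<gamma> - ee j). of_nat (mbinom (\<gamma> - ee j) \<delta>) * (r \<eta> (\<delta> + ee j - ee j) * t (\<alpha> - \<eta>) (\<gamma> - (\<delta> + ee j))))"
        by (rule absorb_sum) (use j in \<open>simp add: in_keys_lk\<close>)
      also have "\<dots> = of_nat (lk \<gamma> j) * K r t \<alpha> \<eta> (\<gamma> - ee j)"
        unfolding K_def diff_plus_ee by simp
      finally show "(\<Sum>\<delta>\<in>subs \<gamma>. a i j * (of_nat (mbinom \<gamma> \<delta>) * (of_nat (lk \<delta> j) * (r \<eta> (\<delta> - ee j) * t (\<alpha> - \<eta>) (\<gamma> - \<delta>)))))
          = a i j * (of_nat (lk \<gamma> j) * K r t \<alpha> \<eta> (\<gamma> - ee j))"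
        by (simp add: sum_distrib_left[symmetric])
    qed simp
    finally have F2: "f (\<eta> + ee i) = (\<Sum>j\<in>Poly_Mapping.keys \<gamma>. a i j * (of_nat (lk \<gamma> j) * K r t \<alpha> \<eta> (\<gamma> - ee j)))" .
    show ?thesis unfolding F1 F2 sum.distrib[symmetric] by (rule sum.cong) (simp_all add: algebra_simps)
  qed
  have "conv r t (\<alpha> + ee i) \<gamma> = (\<Sum>\<eta>\<in>subs (\<alpha> + ee i). of_nat (mbinom (\<alpha> + ee i) \<eta>) * f \<eta>)"
    by (simp add: conv_alt f_def)
  also have "\<dots> = (\<Sum>\<eta>\<in>subs \<alpha>. of_nat (mbinom \<alpha> \<eta>) * (f \<eta> + f (\<eta> + ee i)))"
    by (rule pascal_sum)
  also have "\<dots> = (\<Sum>\<eta>\<in>subs \<alpha>. \<Sum>j\<in>Poly_Mapping.keys \<gamma>. of_nat (lk \<gamma> j) * (a i j + b i j) * (of_nat (mbinom \<alpha> \<eta>) * K r t \<alpha> \<eta> (\<gamma> - ee j)))"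
    by (rule sum.cong) (simp_all add: claim sum_distrib_left mult_ac)
  also have "\<dots> = (\<Sum>j\<in>Poly_Mapping.keys \<gamma>. \<Sum>\<eta>\<in>subs \<alpha>. of_nat (lk \<gamma> j) * (a i j + b i j) * (of_nat (mbinom \<alpha> \<eta>) * K r t \<alpha> \<eta> (\<gamma> - ee j)))"
    by (rule sum.swap)
  also have "\<dots> = (\<Sum>j\<in>Poly_Mapping.keys \<gamma>. of_nat (lk \<gamma> j) * (a i j + b i j) * conv r t \<alpha> (\<gamma> - ee j))"
    by (simp add: conv_alt sum_distrib_left)
  finally show "conv r t (\<alpha> + ee i) \<gamma> = (\<Sum>j\<in>Poly_Mapping.keys \<gamma>. of_nat (lk \<gamma> j) * (a i j + b i j) * conv r t \<alpha> (\<gamma> - ee j))" .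
qed



definition Dr :: "(mono \<Rightarrow> mono \<Rightarrow> 'a::comm_ring_1) \<Rightarrow> mono \<Rightarrow> 'a" where
  "Dr r \<nu> = (\<Sum>\<beta>\<in>subs \<nu>. of_nat (mbinom \<nu> \<beta>) * r \<beta> (\<nu> - \<beta>))"

lemma Dr_0: "bichar r \<Longrightarrow> Dr r 0 = 1"
  by (simp add: Dr_def bc_0l)

lemma D_rec:
  assumes r: "bichar r"
  shows "Dr r (\<nu> + ee i) = (\<Sum>j\<in>Poly_Mapping.keys \<nu>. of_nat (lk \<nu> j) * (r (ee i) (ee j) + r (ee j) (ee i)) * Dr r (\<nu> - ee j))"
proof -
  define f where "f \<beta> = r \<beta> (\<nu> + ee i - \<beta>)" for \<beta>
  define a where "a i j = r (ee i) (ee j)" for i j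
  have r1: "r (\<eta> + ee i) \<delta> = (\<Sum>j\<in>Poly_Mapping.keys \<delta>. of_nat (lk \<delta> j) * a i j * r \<eta> (\<delta> - ee j))" for \<eta> \<delta>
    using rec1_r[OF r] by (simp add: rec1_def a_def)
  have r2: "r \<eta> (\<delta> + ee i) = (\<Sum>j\<in>Poly_Mapping.keys \<eta>. of_nat (lk \<eta> j) * a j i * r (\<eta> - ee j) \<delta>)" for \<eta> \<delta>
    using rec2_r[OF r] by (simp add: a_def)
  have claim: "of_nat (mbinom \<nu> \<beta>) * (f \<beta> + f (\<beta> + ee i)) =
     (\<Sum>j\<in>Poly_Mapping.keys \<nu>. a j i * (of_nat (mbinom \<nu> \<beta>) * (of_nat (lk \<beta> j) * r (\<beta> - ee j) (\<nu> - \<beta>)))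
        + a i j * (of_nat (mbinom \<nu> \<beta>) * (of_nat (lk \<nu> j - lk \<beta> j) * r \<beta> ((\<nu> - ee j) - \<beta>))))"
    if b: "\<beta> \<in> subs \<nu>" for \<beta>
  proof -
    have e1: "\<nu> + ee i - \<beta> = (\<nu> - \<beta>) + ee i"
      using b by (intro mono_eqI) (auto simp: subs_iff)
    have e2: "\<nu> + ee i - (\<beta> + ee i) = \<nu> - \<beta>"
      by (rule mono_eqI) auto
    have "f \<beta> = (\<Sum>j\<in>Poly_Mapping.keys \<beta>. of_nat (lk \<beta> j) * (a j i * r (\<beta> - ee j) (\<nu> - \<beta>)))"
      by (simp add: f_def e1 r2 mult.assoc)
    also have "\<dots> = (\<Sum>j\<in>Poly_Mapping.keys \<nu>. of_nat (lk \<beta> j) * (a j i * r (\<beta> - ee j) (\<nu> - \<beta>)))"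
      by (rule keys_ext) (use b keys_sub in auto)
    finally have F1: "f \<beta> = \<dots>" .
    have "f (\<beta> + ee i) = (\<Sum>j\<in>Poly_Mapping.keys (\<nu> - \<beta>). of_nat (lk (\<nu> - \<beta>) j) * (a i j * r \<beta> (\<nu> - \<beta> - ee j)))"
      by (simp add: f_def e2 r1 mult.assoc)
    also have "\<dots> = (\<Sum>j\<in>Poly_Mapping.keys \<nu>. of_nat (lk (\<nu> - \<beta>) j) * (a i j * r \<beta> (\<nu> - \<beta> - ee j)))"
      by (rule keys_ext) (auto simp: keys_minus_sub)
    finally have F2: "f (\<beta> + ee i) = \<dots>" .
    show ?thesis unfolding F1 F2 sum.distrib[symmetric] sum_distrib_left
      by (rule sum.cong) (simp_all add: diff_ee_comm algebra_simps)
  qed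
  have "Dr r (\<nu> + ee i) = (\<Sum>\<beta>\<in>subs (\<nu> + ee i). of_nat (mbinom (\<nu> + ee i) \<beta>) * f \<beta>)"
    by (simp add: Dr_def f_def)
  also have "\<dots> = (\<Sum>\<beta>\<in>subs \<nu>. of_nat (mbinom \<nu> \<beta>) * (f \<beta> + f (\<beta> + ee i)))"
    by (rule pascal_sum)
  also have "\<dots> = (\<Sum>\<beta>\<in>subs \<nu>. \<Sum>j\<in>Poly_Mapping.keys \<nu>. a j i * (of_nat (mbinom \<nu> \<beta>) * (of_nat (lk \<beta> j) * r (\<beta> - ee j) (\<nu> - \<beta>)))
        + a i j * (of_nat (mbinom \<nu> \<beta>) * (of_nat (lk \<nu> j - lk \<beta> j) * r \<beta> ((\<nu> - ee j) - \<beta>))))"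
    by (rule sum.cong) (simp_all add: claim)
  also have "\<dots> = (\<Sum>j\<in>Poly_Mapping.keys \<nu>. \<Sum>\<beta>\<in>subs \<nu>. a j i * (of_nat (mbinom \<nu> \<beta>) * (of_nat (lk \<beta> j) * r (\<beta> - ee j) (\<nu> - \<beta>)))
        + a i j * (of_nat (mbinom \<nu> \<beta>) * (of_nat (lk \<nu> j - lk \<beta> j) * r \<beta> ((\<nu> - ee j) - \<beta>))))"
    by (rule sum.swap)
  also have "\<dots> = (\<Sum>j\<in>Poly_Mapping.keys \<nu>. of_nat (lk \<nu> j) * (a i j + a j i) * Dr r (\<nu> - ee j))"
  proof (rule sum.cong)
    fix j assume j: "j \<in> Poly_Mapping.keys \<nu>"
    then have nj: "0 < lk \<nu> j" by (simp add: in_keys_lk)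
    have A1: "(\<Sum>\<beta>\<in>subs \<nu>. of_nat (mbinom \<nu> \<beta>) * (of_nat (lk \<beta> j) * r (\<beta> - ee j) (\<nu> - \<beta>))) = of_nat (lk \<nu> j) * Dr r (\<nu> - ee j)"
      unfolding absorb_sum[OF nj] Dr_def diff_plus_ee by simp
    have A2: "(\<Sum>\<beta>\<in>subs \<nu>. of_nat (mbinom \<nu> \<beta>) * (of_nat (lk \<nu> j - lk \<beta> j) * r \<beta> ((\<nu> - ee j) - \<beta>))) = of_nat (lk \<nu> j) * Dr r (\<nu> - ee j)"
      unfolding absorb_sum'[OF nj] Dr_def by simp
    show "(\<Sum>\<beta>\<in>subs \<nu>. a j i * (of_nat (mbinom \<nu> \<beta>) * (of_nat (lk \<beta> j) * r (\<beta> - ee j) (\<nu> - \<beta>)))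
        + a i j * (of_nat (mbinom \<nu> \<beta>) * (of_nat (lk \<nu> j - lk \<beta> j) * r \<beta> ((\<nu> - ee j) - \<beta>))))
        = of_nat (lk \<nu> j) * (a i j + a j i) * Dr r (\<nu> - ee j)"
      unfolding sum.distrib sum_distrib_left[symmetric] A1 A2 by (simp add: algebra_simps)
  qed simp
  finally show ?thesis by (simp add: a_def)
qed

lemma mdeg_minus_ee: "0 < lk \<mu> j \<Longrightarrow> mdeg (\<mu> - ee j) < mdeg \<mu>"
  using mdeg_add[of "\<mu> - ee j" "ee j"] minus_plus_ee[of \<mu> j] by simp

lemma D_unique:
  assumes r: "bichar r" and r': "bichar r'"
    and c: "\<And>i j. r (ee i) (ee j) + r (ee j) (ee i) = r' (ee i) (ee j) + r' (ee j) (ee i)"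
  shows "Dr r = Dr r'"
proof
  fix \<nu> show "Dr r \<nu> = Dr r' \<nu>"
  proof (induction \<nu> rule: measure_induct_rule[of mdeg])
    case (less \<nu>)
    show ?case
    proof (cases "\<nu> = 0")
      case True then show ?thesis by (simp add: Dr_0[OF r] Dr_0[OF r'])
    next
      case False
      then obtain i where i: "\<nu> = (\<nu> - ee i) + ee i" by (rule decomp_nonzero)
      define \<mu> where "\<mu> = \<nu> - ee i"
      have lt: "mdeg (\<mu> - ee j) < mdeg \<nu>" if "j \<in> Poly_Mapping.keys \<mu>" for j
        using mdeg_minus_ee[of \<mu> j] that i mdeg_add[of \<mu> "ee i"] by (simp add: in_keys_lk \<mu>_def)
      have "Dr r (\<mu> + ee i) = Dr r' (\<mu> + ee i)"
        unfolding D_rec[OF r] D_rec[OF r'] c by (rule sum.cong) (simp_all add: less lt)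
      then show ?thesis using i by (simp add: \<mu>_def)
    qed
  qed
qed



lemma single_sum: "Poly_Mapping.single k (\<Sum>x\<in>A. g x) = (\<Sum>x\<in>A. Poly_Mapping.single k (g x))"
  by (induction A rule: infinite_finite_induct) (simp_all add: single_add)

lemma multinom:
  assumes b: "\<beta> \<in> subs \<alpha>" and g: "\<gamma> \<in> subs (\<alpha> - \<beta>)"
  shows "mbinom \<alpha> \<beta> * mbinom (\<alpha> - \<beta>) \<gamma> = mbinom \<alpha> (\<beta> + \<gamma>) * mbinom (\<beta> + \<gamma>) \<beta>"
proof -
  let ?S = "Poly_Mapping.keys \<alpha>"
  have bg: "\<beta> + \<gamma> \<in> subs \<alpha>" using b g by (auto simp: subs_iff) (metis le_diff_conv2 add.commute)
  have bb: "\<beta> \<in> subs (\<beta> + \<gamma>)" by (simp add: subs_iff)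
  have k1: "Poly_Mapping.keys (\<alpha> - \<beta>) \<subseteq> ?S" by (rule keys_minus_sub)
  have k2: "Poly_Mapping.keys (\<beta> + \<gamma>) \<subseteq> ?S" using bg keys_sub by blast
  have "mbinom \<alpha> \<beta> * mbinom (\<alpha> - \<beta>) \<gamma> = (\<Prod>k\<in>?S. (lk \<alpha> k choose lk \<beta> k) * (lk (\<alpha> - \<beta>) k choose lk \<gamma> k))"
    using mb_S[of ?S \<alpha> \<beta>] mb_S[of ?S "\<alpha> - \<beta>" \<gamma>] b g k1 by (simp add: prod.distrib)
  also have "\<dots> = (\<Prod>k\<in>?S. (lk \<alpha> k choose lk (\<beta> + \<gamma>) k) * (lk (\<beta> + \<gamma>) k choose lk \<beta> k))"
  proof (rule prod.cong)
    fix k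
    have "lk \<beta> k + lk \<gamma> k \<le> lk \<alpha> k" using bg by (simp add: subs_iff)
    then show "(lk \<alpha> k choose lk \<beta> k) * (lk (\<alpha> - \<beta>) k choose lk \<gamma> k) = (lk \<alpha> k choose lk (\<beta> + \<gamma>) k) * (lk (\<beta> + \<gamma>) k choose lk \<beta> k)"
      using choose_mult[of "lk \<beta> k" "lk \<beta> k + lk \<gamma> k" "lk \<alpha> k"] by simp
  qed simp
  also have "\<dots> = mbinom \<alpha> (\<beta> + \<gamma>) * mbinom (\<beta> + \<gamma>) \<beta>"
    using mb_S[of ?S \<alpha> "\<beta> + \<gamma>"] mb_S[of ?S "\<beta> + \<gamma>" \<beta>] bg bb k2 by (simp add: prod.distrib)
  finally show ?thesis .
qed

lemma EQ_mono:
  "(\<Sum>\<beta>\<in>subs \<alpha>. \<Sum>\<gamma>\<in>subs (\<alpha> - \<beta>). Poly_Mapping.single (\<alpha> - \<beta> - \<gamma>) (c * of_nat (mbinom \<alpha> \<beta> * mbinom (\<alpha> - \<beta>) \<gamma>) * r \<beta> \<gamma>))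
   = (\<Sum>\<nu>\<in>subs \<alpha>. Poly_Mapping.single (\<alpha> - \<nu>) (c * of_nat (mbinom \<alpha> \<nu>) * Dr r \<nu>))"
  (is "?L = ?R")
proof -
  have "?L = (\<Sum>(\<beta>,\<gamma>)\<in>Sigma (subs \<alpha>) (\<lambda>\<beta>. subs (\<alpha> - \<beta>)). Poly_Mapping.single (\<alpha> - \<beta> - \<gamma>) (c * of_nat (mbinom \<alpha> \<beta> * mbinom (\<alpha> - \<beta>) \<gamma>) * r \<beta> \<gamma>))"
    by (rule sum.Sigma) auto
  also have "\<dots> = (\<Sum>(\<nu>,\<beta>)\<in>Sigma (subs \<alpha>) subs. Poly_Mapping.single (\<alpha> - \<nu>) (c * of_nat (mbinom \<alpha> \<nu>) * (of_nat (mbinom \<nu> \<beta>) * r \<beta> (\<nu> - \<beta>))))"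
  proof (rule sum.reindex_bij_witness[where j="\<lambda>(\<beta>,\<gamma>). (\<beta> + \<gamma>, \<beta>)" and i="\<lambda>(\<nu>,\<beta>). (\<beta>, \<nu> - \<beta>)"])
    fix a assume "a \<in> Sigma (subs \<alpha>) (\<lambda>\<beta>. subs (\<alpha> - \<beta>))"
    then obtain \<beta> \<gamma> where a: "a = (\<beta>, \<gamma>)" "\<beta> \<in> subs \<alpha>" "\<gamma> \<in> subs (\<alpha> - \<beta>)" by auto
    have bg: "\<beta> + \<gamma> \<in> subs \<alpha>" using a by (auto simp: subs_iff) (metis le_diff_conv2 add.commute)
    show "(case case a of (\<beta>, \<gamma>) \<Rightarrow> (\<beta> + \<gamma>, \<beta>) of (\<nu>, \<beta>) \<Rightarrow> (\<beta>, \<nu> - \<beta>)) = a" using a by simp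
    show "(case a of (\<beta>, \<gamma>) \<Rightarrow> (\<beta> + \<gamma>, \<beta>)) \<in> Sigma (subs \<alpha>) subs" using a bg by (auto simp: subs_iff)
    have e: "\<alpha> - (\<beta> + \<gamma>) = \<alpha> - \<beta> - \<gamma>" by (rule mono_eqI) auto
    show "(case case a of (\<beta>, \<gamma>) \<Rightarrow> (\<beta> + \<gamma>, \<beta>) of (\<nu>, \<beta>) \<Rightarrow> Poly_Mapping.single (\<alpha> - \<nu>) (c * of_nat (mbinom \<alpha> \<nu>) * (of_nat (mbinom \<nu> \<beta>) * r \<beta> (\<nu> - \<beta>)))) =
          (case a of (\<beta>, \<gamma>) \<Rightarrow> Poly_Mapping.single (\<alpha> - \<beta> - \<gamma>) (c * of_nat (mbinom \<alpha> \<beta> * mbinom (\<alpha> - \<beta>) \<gamma>) * r \<beta> \<gamma>))"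
    proof -
      have m: "(of_nat (mbinom \<alpha> \<beta>) * of_nat (mbinom (\<alpha> - \<beta>) \<gamma>) :: 'a) = of_nat (mbinom \<alpha> (\<beta> + \<gamma>)) * of_nat (mbinom (\<beta> + \<gamma>) \<beta>)"
        using multinom[OF a(2,3)] by (metis of_nat_mult)
      have "c * of_nat (mbinom \<alpha> (\<beta> + \<gamma>)) * (of_nat (mbinom (\<beta> + \<gamma>) \<beta>) * r \<beta> \<gamma>) = c * of_nat (mbinom \<alpha> \<beta> * mbinom (\<alpha> - \<beta>) \<gamma>) * r \<beta> \<gamma>"
        unfolding of_nat_mult m by (simp add: mult.assoc)
      then show ?thesis using a e by simp
    qed
  next
    fix b assume "b \<in> Sigma (subs \<alpha>) subs"
    then obtain \<nu> \<beta> where b: "b = (\<nu>, \<beta>)" "\<nu> \<in> subs \<alpha>" "\<beta> \<in> subs \<nu>" by auto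
    have e: "\<beta> + (\<nu> - \<beta>) = \<nu>" using b by (intro mono_eqI) (auto simp: subs_iff)
    show "(case case b of (\<nu>, \<beta>) \<Rightarrow> (\<beta>, \<nu> - \<beta>) of (\<beta>, \<gamma>) \<Rightarrow> (\<beta> + \<gamma>, \<beta>)) = b" using b e by simp
    show "(case b of (\<nu>, \<beta>) \<Rightarrow> (\<beta>, \<nu> - \<beta>)) \<in> Sigma (subs \<alpha>) (\<lambda>\<beta>. subs (\<alpha> - \<beta>))"
      using b by (auto simp: subs_iff) (meson order_trans diff_le_mono)+
  qed
  also have "\<dots> = (\<Sum>\<nu>\<in>subs \<alpha>. \<Sum>\<beta>\<in>subs \<nu>. Poly_Mapping.single (\<alpha> - \<nu>) (c * of_nat (mbinom \<alpha> \<nu>) * (of_nat (mbinom \<nu> \<beta>) * r \<beta> (\<nu> - \<beta>))))"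
    by (rule sum.Sigma[symmetric]) auto
  also have "\<dots> = ?R"
    unfolding Dr_def sum_distrib_left single_sum by simp
  finally show ?thesis .
qed

lemma EQ_D: "EQ r p = (\<Sum>\<alpha>\<in>Poly_Mapping.keys p. \<Sum>\<nu>\<in>subs \<alpha>. Poly_Mapping.single (\<alpha> - \<nu>) (lk p \<alpha> * of_nat (mbinom \<alpha> \<nu>) * Dr r \<nu>))"
  unfolding EQ_def by (rule sum.cong[OF refl], rule EQ_mono)

lemma EQ_lookup0: "lk (EQ r p) 0 = (\<Sum>\<alpha>\<in>Poly_Mapping.keys p. lk p \<alpha> * Dr r \<alpha>)"
proof -
  have "lk (EQ r p) 0 = (\<Sum>\<alpha>\<in>Poly_Mapping.keys p. \<Sum>\<nu>\<in>subs \<alpha>. if \<nu> = \<alpha> then lk p \<alpha> * Dr r \<alpha> else 0)"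
    unfolding EQ_D lookup_sum
  proof (intro sum.cong refl)
    fix \<alpha> \<nu> assume "\<nu> \<in> subs \<alpha>"
    then have "(\<alpha> - \<nu> = 0) = (\<nu> = \<alpha>)"
      by (auto simp: subs_iff poly_mapping_eq_iff fun_eq_iff intro: le_antisym)
    then show "lk (Poly_Mapping.single (\<alpha> - \<nu>) (lk p \<alpha> * of_nat (mbinom \<alpha> \<nu>) * Dr r \<nu>)) 0 = (if \<nu> = \<alpha> then lk p \<alpha> * Dr r \<alpha> else 0)"
      by (auto simp: lookup_single)
  qed
  then show ?thesis by simp
qed



lemma conv_rt_rec: assumes r: "bichar r" shows "rec1 (\<lambda>i j. r (ee i) (ee j) + r (ee j) (ee i)) (conv r (transp r))"
  by (rule rec1_conv[OF rec1_r[OF r] rec1_transp[OF r]])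

lemma claim2:
  assumes r: "bichar r" and r': "bichar r'" and h: "conv r' (transp r') = conv r (transp r)"
  shows "EQ r' = EQ r"
proof -
  have "r' (ee i) (ee j) + r' (ee j) (ee i) = r (ee i) (ee j) + r (ee j) (ee i)" for i j
    using rec1_ee[OF conv_rt_rec[OF r], of i j] rec1_ee[OF conv_rt_rec[OF r'], of i j] h by simp
  then have "Dr r' = Dr r" using D_unique[OF r' r] by blast
  then show ?thesis by (simp add: fun_eq_iff EQ_D)
qed

lemma EQ_lookup0_S: "finite S \<Longrightarrow> Poly_Mapping.keys p \<subseteq> S \<Longrightarrow> lk (EQ r p) 0 = (\<Sum>\<alpha>\<in>S. lk p \<alpha> * Dr r \<alpha>)"
  unfolding EQ_lookup0 by (rule sum.mono_neutral_left) (auto simp: in_keys_iff)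

lemma ee_add_ne0 [simp]: "ee i + ee j \<noteq> 0"
proof
  assume "ee i + ee j = 0"
  then have "lk (ee i + ee j) i = 0" by simp
  then show False by simp
qed

lemma bprod_ee:
  assumes s: "bichar s" and one: "(1::'a::comm_ring_1) \<noteq> 0"
  shows "bprod s (Poly_Mapping.single (ee i) (1::'a)) (Poly_Mapping.single (ee j) 1)
     = Poly_Mapping.single 0 (s (ee i) (ee j)) + Poly_Mapping.single (ee i + ee j) 1"
  unfolding bprod_def using one by (simp add: subs_ee bc_0l[OF s] bc_0r[OF s])

lemma EQ_ee:
  assumes r: "bichar r" and one: "(1::'a::comm_ring_1) \<noteq> 0"
  shows "EQ r (Poly_Mapping.single (ee i) (1::'a)) = Poly_Mapping.single (ee i) 1"
proof -
  have "Dr r (0 + ee i) = 0" unfolding D_rec[OF r] by simp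
  then show ?thesis using one by (simp add: EQ_D subs_ee Dr_0[OF r])
qed

lemma claim1:
  fixes \<iota> :: "complex \<Rightarrow> 'a::comm_ring_1" and s1 s2 r :: "mono \<Rightarrow> mono \<Rightarrow> 'a"
  assumes C: "C_alg \<iota>" and s1: "bichar s1" and s2: "bichar s2" and r: "bichar r"
    and I: "intertw \<iota> r s1 s2" and one: "(1::'a) \<noteq> 0"
  shows "conv r (transp r) = conv s2 (binv s1)"
proof -
  have i1: "\<iota> 1 = 1" using C by (simp add: C_alg_def)
  have emb: "emb \<iota> (Poly_Mapping.single k 1) = Poly_Mapping.single k 1" for k
    unfolding emb_def by (subst map_single) (simp_all add: i1)
  have key: "s1 (ee i) (ee j) + (r (ee i) (ee j) + r (ee j) (ee i)) = s2 (ee i) (ee j)" for i j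
  proof -
    let ?p = "Poly_Mapping.single 0 (s1 (ee i) (ee j)) + Poly_Mapping.single (ee i + ee j) (1::'a)"
    have eq: "EQ r ?p = bprod s2 (Poly_Mapping.single (ee i) 1) (Poly_Mapping.single (ee j) 1)"
      using I[unfolded intertw_def, rule_format, of "Poly_Mapping.single (ee i) 1" "Poly_Mapping.single (ee j) 1"]
      unfolding emb bprod_ee[OF s1 one] EQ_ee[OF r one] .
    have "lk (EQ r ?p) 0 = (\<Sum>\<alpha>\<in>{0, ee i + ee j}. lk ?p \<alpha> * Dr r \<alpha>)"
    proof (rule EQ_lookup0_S)
      show "Poly_Mapping.keys ?p \<subseteq> {0, ee i + ee j}"
        using keys_add[of "Poly_Mapping.single 0 (s1 (ee i) (ee j))" "Poly_Mapping.single (ee i + ee j) (1::'a)"]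
        by (auto split: if_splits)
    qed simp
    also have "\<dots> = s1 (ee i) (ee j) + Dr r (ee j + ee i)"
      by (simp add: Dr_0[OF r] lookup_single add.commute)
    also have "Dr r (ee j + ee i) = r (ee i) (ee j) + r (ee j) (ee i)"
      unfolding D_rec[OF r] by (simp add: Dr_0[OF r])
    finally have "lk (EQ r ?p) 0 = s1 (ee i) (ee j) + (r (ee i) (ee j) + r (ee j) (ee i))" .
    moreover have "lk (bprod s2 (Poly_Mapping.single (ee i) 1) (Poly_Mapping.single (ee j) 1)) 0 = s2 (ee i) (ee j)"
      unfolding bprod_ee[OF s2 one] by (simp add: lookup_single)
    ultimately show ?thesis using eq by simp
  qed
  have R2: "rec1 (\<lambda>i j. s2 (ee i) (ee j) + - s1 (ee i) (ee j)) (conv s2 (binv s1))"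
    by (rule rec1_conv[OF rec1_r[OF s2] rec1_binv[OF rec1_r[OF s1]]])
  have "(\<lambda>i j. s2 (ee i) (ee j) + - s1 (ee i) (ee j)) = (\<lambda>i j. r (ee i) (ee j) + r (ee j) (ee i))"
    using key by (simp add: fun_eq_iff algebra_simps)
  then have R2': "rec1 (\<lambda>i j. r (ee i) (ee j) + r (ee j) (ee i)) (conv s2 (binv s1))" using R2 by simp
  show ?thesis by (rule rec1_unique[OF conv_rt_rec[OF r] R2'])
qed


theorem corollary3p6:
  fixes \<iota> :: "complex \<Rightarrow> 'a::comm_ring_1"
    and s1 s2 r :: "mono \<Rightarrow> mono \<Rightarrow> 'a"
  assumes "C_alg \<iota>"
    and "bichar s1" and "symm s1" and "bichar s2" and "symm s2"
    and "bichar r"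
    and "intertw \<iota> r s1 s2"
  shows "conv r (transp r) = conv s2 (binv s1)
    \<and> (\<forall>r'. bichar r' \<and> conv r' (transp r') = conv r (transp r) \<longrightarrow> EQ r' = EQ r)
    \<and> (\<forall>r'. bichar r' \<and> intertw \<iota> r' s1 s2 \<longrightarrow> EQ r' = EQ r)"
proof (cases "(1::'a) = 0")
  case True
  have z: "x = 0" for x :: 'a by (metis True mult_1 mult_zero_left)
  have fz: "f = g" for f g :: "mono \<Rightarrow> mono \<Rightarrow> 'a" using z[of "f _ _"] z[of "g _ _"] by (metis ext)
  have pz: "p = q" for p q :: "mono \<Rightarrow>\<^sub>0 'a" by (rule poly_mapping_eqI) (metis z)
  have ez: "F = G" for F G :: "(mono \<Rightarrow>\<^sub>0 'a) \<Rightarrow> (mono \<Rightarrow>\<^sub>0 'a)" using pz by (metis ext)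
  show ?thesis using fz ez by blast
next
  case False
  have c1: "conv r (transp r) = conv s2 (binv s1)"
    by (rule claim1[OF assms(1,2,4,6,7) False])
  show ?thesis
  proof (intro conjI allI impI)
    show "conv r (transp r) = conv s2 (binv s1)" by (rule c1)
  next
    fix r' assume "bichar r' \<and> conv r' (transp r') = conv r (transp r)"
    then show "EQ r' = EQ r" using claim2[OF assms(6)] by blast
  next
    fix r' assume h: "bichar r' \<and> intertw \<iota> r' s1 s2"
    then have "conv r' (transp r') = conv s2 (binv s1)"
      using claim1[OF assms(1,2,4) _ _ False] by blast
    then show "EQ r' = EQ r" using claim2[OF assms(6)] h c1 by simp
  qed
qed

end
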